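(* Let $p$ be an odd prime and $G_1=\langle a\rangle+\langle b\rangle+\langle c\rangle$ the additively written group with $ap=bp=cp=0$, $a+b=b+a+c$, $c$ central; write elements as $x=ax_1+bx_2+cx_3$ ($0\le x_i<p$). For maps $\beta,\gamma\colon G_1\to\mathbb Z_p$ define $$x\cdot y=ax_1y_1+b(x_2y_1+\beta(x)y_2)+c\Big(-x_1x_2\tbinom{y_1}{2}+x_3y_1+\gamma(x)y_2+x_1\beta(x)y_3\Big).$$ Then each of the following choices of $(\beta,\gamma)$ occurs as the pair of maps of a local nearring $(G_1,+,\cdot)$ with identity $a$ (where $x\cdot b=b\beta(x)+c\gamma(x)$): 1) $\beta(x)=x_1^{\,i}$ and $\gamma(x)=0$, for $0<i<p$; 2) $\beta(x)=1$ and $\gamma(x)=0$; 3) $\beta(x)=x_1^2$ and $\gamma(x)=x_1x_2$.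
   Context: A (left) nearring is a set $R$ with operations $+,\cdot$ such that $(R,+)$ is a group, $(R,\cdot)$ a semigroup, and $x(y+z)=xy+xz$ for all $x,y,z$. A nearring with identity is local if its non-invertible elements form a subgroup of $(R,+)$. Additive notation: $gk$ is $g$ added $k$ times; coefficients are read modulo $p$. *)

theory Defs
  imports "HOL-Algebra.Group" "HOL-Computational_Algebra.Primes"
begin

definition add_grp :: "'a set \<Rightarrow> ('a \<Rightarrow> 'a \<Rightarrow> 'a) \<Rightarrow> 'a \<Rightarrow> 'a monoid" where
  "add_grp R add z = \<lparr>carrier = R, monoid.mult = add, one = z\<rparr>"

definition nearring :: "'a set \<Rightarrow> ('a \<Rightarrow> 'a \<Rightarrow> 'a) \<Rightarrow> 'a \<Rightarrow> ('a \<Rightarrow> 'a \<Rightarrow> 'a) \<Rightarrow> bool" where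
  "nearring R add z mul \<longleftrightarrow>
     group (add_grp R add z) \<and>
     (\<forall>x\<in>R. \<forall>y\<in>R. mul x y \<in> R) \<and>
     (\<forall>x\<in>R. \<forall>y\<in>R. \<forall>w\<in>R. mul (mul x y) w = mul x (mul y w)) \<and>
     (\<forall>x\<in>R. \<forall>y\<in>R. \<forall>w\<in>R. mul x (add y w) = add (mul x y) (mul x w))"

definition local_nearring_with_identity ::
  "'a set \<Rightarrow> ('a \<Rightarrow> 'a \<Rightarrow> 'a) \<Rightarrow> 'a \<Rightarrow> ('a \<Rightarrow> 'a \<Rightarrow> 'a) \<Rightarrow> 'a \<Rightarrow> bool" where
  "local_nearring_with_identity R add z mul e \<longleftrightarrow>
     nearring R add z mul \<and> e \<in> R \<and>
     (\<forall>x\<in>R. mul e x = x \<and> mul x e = x) \<and>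
     subgroup {x \<in> R. \<not> (\<exists>y\<in>R. mul x y = e \<and> mul y x = e)} (add_grp R add z)"

text \<open>The element a x1 + b x2 + c x3 (normal form, 0 \<le> xi < p) is the triple (x1,x2,x3).\<close>
definition G1 :: "int \<Rightarrow> (int \<times> int \<times> int) set" where
  "G1 p = {(x1, x2, x3). 0 \<le> x1 \<and> x1 < p \<and> 0 \<le> x2 \<and> x2 < p \<and> 0 \<le> x3 \<and> x3 < p}"

text \<open>Addition derived from a+b = b+a+c, c central:
  (a x1+b x2+c x3)+(a y1+b y2+c y3) = a(x1+y1) + b(x2+y2) + c(x3+y3-x2 y1).\<close>
definition addG :: "int \<Rightarrow> int \<times> int \<times> int \<Rightarrow> int \<times> int \<times> int \<Rightarrow> int \<times> int \<times> int" where
  "addG p x y = (case x of (x1, x2, x3) \<Rightarrow> case y of (y1, y2, y3) \<Rightarrow>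
      ((x1 + y1) mod p, (x2 + y2) mod p, (x3 + y3 - x2 * y1) mod p))"

definition zeroG :: "int \<times> int \<times> int" where "zeroG = (0, 0, 0)"

definition genA :: "int \<times> int \<times> int" where "genA = (1, 0, 0)"

text \<open>The multiplication determined by beta, gamma (maps G_1 \<rightarrow> Z_p, values read mod p);
  binom(y1,2) = y1 (y1-1) div 2 with 0 \<le> y1 < p.\<close>
definition mulG :: "int \<Rightarrow> (int \<times> int \<times> int \<Rightarrow> int) \<Rightarrow> (int \<times> int \<times> int \<Rightarrow> int)
    \<Rightarrow> int \<times> int \<times> int \<Rightarrow> int \<times> int \<times> int \<Rightarrow> int \<times> int \<times> int" where
  "mulG p \<beta> \<gamma> x y = (case x of (x1, x2, x3) \<Rightarrow> case y of (y1, y2, y3) \<Rightarrow>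
      ((x1 * y1) mod p,
       (x2 * y1 + \<beta> x * y2) mod p,
       (- x1 * x2 * (y1 * (y1 - 1) div 2) + x3 * y1 + \<gamma> x * y2 + x1 * \<beta> x * y3) mod p))"

end

theory Submission imports Defs "HOL-Number_Theory.Cong" begin

lemma two_C: "2 * ((n::int) * (n - 1) div 2) = n * (n - 1)"
proof -
  have "even (n * (n - 1))" by simp
  then show ?thesis by simp
qed

lemma mod_cong_intro: "[a = b] (mod p) \<Longrightarrow> [(a::int) mod p = b] (mod p)"
  by (simp add: cong_def)

lemma cong_uminus: "[a = b] (mod p) \<Longrightarrow> [-(a::int) = - b] (mod p)"
  by (simp add: cong_minus_minus_iff)

lemma Ccong:
  fixes p a b :: int
  assumes "odd p" "[a = b] (mod p)"
  shows "[a*(a-1) div 2 = b*(b-1)*((p+1) div 2)] (mod p)"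
proof -
  define c where "c = a*(a-1) div 2"
  define h where "h = (p+1) div 2"
  have h: "p + 1 = 2*h"
  proof -
    obtain k where "p = 2*k + 1" using assms(1) by (rule oddE)
    then show ?thesis unfolding h_def by simp
  qed
  have c: "2*c = a*(a-1)" unfolding c_def by (rule two_C)
  have "[c = c + c * p] (mod p)" by (simp add: cong_def)
  also have "c + c*p = c*(p+1)" by (simp add: algebra_simps)
  also have "\<dots> = (2*c)*h" using h by simp
  also have "\<dots> = a*(a-1)*h" using c by simp
  also have "[a*(a-1)*h = b*(b-1)*h] (mod p)"
    by (intro cong_mult cong_diff assms(2) cong_refl)
  finally show ?thesis unfolding c_def h_def .
qed

lemma G1_iff: "(x1, x2, x3) \<in> G1 p \<longleftrightarrow> 0 \<le> x1 \<and> x1 < p \<and> 0 \<le> x2 \<and> x2 < p \<and> 0 \<le> x3 \<and> x3 < p"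
  by (simp add: G1_def)

lemma cong_eqI: "0 \<le> a \<Longrightarrow> a < p \<Longrightarrow> 0 \<le> b \<Longrightarrow> b < p \<Longrightarrow> [a = b] (mod p) \<Longrightarrow> (a::int) = b"
  by (simp add: cong_def)

lemma addG_simp: "addG p (x1,x2,x3) (y1,y2,y3) = ((x1 + y1) mod p, (x2 + y2) mod p, (x3 + y3 - x2 * y1) mod p)"
  by (simp add: addG_def)

lemma addG_closed: "p > 0 \<Longrightarrow> addG p x y \<in> G1 p"
  by (cases x; cases y) (simp add: addG_simp G1_iff)

lemma addG_inv:
  assumes "p > 0"
  shows "addG p ((- x1) mod p, (- x2) mod p, (- x3 - x2 * x1) mod p) (x1,x2,x3) = zeroG"
proof -
  have "[(- x3 - x2 * x1) mod p + x3 - (- x2) mod p * x1 = (- x3 - x2 * x1) + x3 - (- x2) * x1] (mod p)"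
    by (intro cong_refl cong_add cong_diff cong_mult mod_cong_intro)
  then have "[(- x3 - x2 * x1) mod p + x3 - (- x2) mod p * x1 = 0] (mod p)" by simp
  then show ?thesis by (simp add: addG_simp zeroG_def cong_def mod_simps)
qed

lemma ag_simps [simp]: "monoid.mult (add_grp R a z) = a" "carrier (add_grp R a z) = R" "one (add_grp R a z) = z"
  by (simp_all add: add_grp_def)

lemma triple_eqI: "[a1 = b1] (mod p) \<Longrightarrow> [a2 = b2] (mod p) \<Longrightarrow> [a3 = b3] (mod p) \<Longrightarrow>
  ((a1::int) mod p, (a2::int) mod p, (a3::int) mod p) = (b1 mod p, b2 mod p, b3 mod p)"
  by (simp add: cong_def)

lemma add_assoc:
  fixes p :: int
  shows "addG p (addG p x y) z = addG p x (addG p y z)"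
proof -
  obtain x1 x2 x3 where x: "x = (x1,x2,x3)" by (cases x)
  obtain y1 y2 y3 where y: "y = (y1,y2,y3)" by (cases y)
  obtain z1 z2 z3 where z: "z = (z1,z2,z3)" by (cases z)
  have a1: "[(x1 + y1) mod p + z1 = x1 + (y1 + z1) mod p] (mod p)"
  proof -
    have "[(x1 + y1) mod p + z1 = x1 + y1 + z1] (mod p)" by (intro cong_refl cong_add mod_cong_intro)
    also have "[x1 + y1 + z1 = x1 + (y1 + z1) mod p] (mod p)"
      by (simp only: add.assoc; rule cong_sym; intro cong_refl cong_add mod_cong_intro)
    finally show ?thesis .
  qed
  have a2: "[(x2 + y2) mod p + z2 = x2 + (y2 + z2) mod p] (mod p)"
  proof -
    have "[(x2 + y2) mod p + z2 = x2 + y2 + z2] (mod p)" by (intro cong_refl cong_add mod_cong_intro)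
    also have "[x2 + y2 + z2 = x2 + (y2 + z2) mod p] (mod p)"
      by (simp only: add.assoc; rule cong_sym; intro cong_refl cong_add mod_cong_intro)
    finally show ?thesis .
  qed
  have a3: "[(x3 + y3 - x2 * y1) mod p + z3 - (x2 + y2) mod p * z1 = x3 + (y3 + z3 - y2 * z1) mod p - x2 * ((y1 + z1) mod p)] (mod p)"
  proof -
    have "[(x3 + y3 - x2 * y1) mod p + z3 - (x2 + y2) mod p * z1 = (x3 + y3 - x2 * y1) + z3 - (x2 + y2) * z1] (mod p)"
      by (intro cong_refl cong_add cong_diff cong_mult mod_cong_intro)
    also have "(x3 + y3 - x2 * y1) + z3 - (x2 + y2) * z1 = x3 + (y3 + z3 - y2 * z1) - x2 * (y1 + z1)"
      by (simp add: algebra_simps)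
    also have "[x3 + (y3 + z3 - y2 * z1) - x2 * (y1 + z1) = x3 + (y3 + z3 - y2 * z1) mod p - x2 * ((y1 + z1) mod p)] (mod p)"
      by (rule cong_sym) (intro cong_refl cong_add cong_diff cong_mult mod_cong_intro)
    finally show ?thesis .
  qed
  show ?thesis unfolding x y z addG_simp by (rule triple_eqI[OF a1 a2 a3])
qed

lemma add_group:
  fixes p :: int
  assumes "p > 0"
  shows "group (add_grp (G1 p) (addG p) zeroG)"
proof (rule groupI)
  fix x y z
  show "monoid.mult (add_grp (G1 p) (addG p) zeroG) (monoid.mult (add_grp (G1 p) (addG p) zeroG) x y) z =
           monoid.mult (add_grp (G1 p) (addG p) zeroG) x (monoid.mult (add_grp (G1 p) (addG p) zeroG) y z)"
    by (simp only: ag_simps add_assoc)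
next
  fix x assume "x \<in> carrier (add_grp (G1 p) (addG p) zeroG)"
  then obtain x1 x2 x3 where x: "x = (x1,x2,x3)" and r: "0 \<le> x1 \<and> x1 < p \<and> 0 \<le> x2 \<and> x2 < p \<and> 0 \<le> x3 \<and> x3 < p"
    by (cases x) (simp only: ag_simps G1_iff)
  show "monoid.mult (add_grp (G1 p) (addG p) zeroG) \<one>\<^bsub>add_grp (G1 p) (addG p) zeroG\<^esub> x = x"
    using r by (simp add: x addG_simp zeroG_def mod_pos_pos_trivial)
  let ?y = "((- x1) mod p, (- x2) mod p, (- x3 - x2 * x1) mod p)"
  have "?y \<in> G1 p" using assms by (simp add: G1_iff)
  moreover have "addG p ?y x = zeroG" unfolding x by (rule addG_inv[OF assms])
  ultimately show "\<exists>y\<in>carrier (add_grp (G1 p) (addG p) zeroG). monoid.mult (add_grp (G1 p) (addG p) zeroG) y x = \<one>\<^bsub>add_grp (G1 p) (addG p) zeroG\<^esub>"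
    by (simp only: ag_simps) blast
next
  fix x y show "x \<in> carrier (add_grp (G1 p) (addG p) zeroG) \<Longrightarrow> y \<in> carrier (add_grp (G1 p) (addG p) zeroG) \<Longrightarrow> monoid.mult (add_grp (G1 p) (addG p) zeroG) x y \<in> carrier (add_grp (G1 p) (addG p) zeroG)"
    using assms by (simp only: ag_simps addG_closed)
next
  show "\<one>\<^bsub>add_grp (G1 p) (addG p) zeroG\<^esub> \<in> carrier (add_grp (G1 p) (addG p) zeroG)"
    using assms by (simp add: zeroG_def G1_iff)
qed

lemma mulG_simp: "mulG p \<beta> \<gamma> (x1,x2,x3) (y1,y2,y3) =
      ((x1 * y1) mod p,
       (x2 * y1 + \<beta> (x1,x2,x3) * y2) mod p,
       (- x1 * x2 * (y1 * (y1 - 1) div 2) + x3 * y1 + \<gamma> (x1,x2,x3) * y2 + x1 * \<beta> (x1,x2,x3) * y3) mod p)"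
  by (simp add: mulG_def)

lemma mulG_closed: "p > 0 \<Longrightarrow> mulG p \<beta> \<gamma> x y \<in> G1 p"
  by (cases x; cases y) (simp add: mulG_simp G1_iff)

lemma mul_assoc:
  fixes p :: int
  assumes p: "p > 0" "odd p"
  and H1: "\<And>x y. x \<in> G1 p \<Longrightarrow> y \<in> G1 p \<Longrightarrow> [\<beta> (mulG p \<beta> \<gamma> x y) = \<beta> x * \<beta> y] (mod p)"
  and H2: "\<And>x y. x \<in> G1 p \<Longrightarrow> y \<in> G1 p \<Longrightarrow> [\<gamma> (mulG p \<beta> \<gamma> x y) = \<gamma> x * \<beta> y + fst x * \<beta> x * \<gamma> y] (mod p)"
  and xyz: "x \<in> G1 p" "y \<in> G1 p" "z \<in> G1 p"
  shows "mulG p \<beta> \<gamma> (mulG p \<beta> \<gamma> x y) z = mulG p \<beta> \<gamma> x (mulG p \<beta> \<gamma> y z)"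
proof -
  obtain x1 x2 x3 where x: "x = (x1,x2,x3)" by (cases x)
  obtain y1 y2 y3 where y: "y = (y1,y2,y3)" by (cases y)
  obtain z1 z2 z3 where z: "z = (z1,z2,z3)" by (cases z)
  obtain w1 w2 w3 where w: "mulG p \<beta> \<gamma> x y = (w1,w2,w3)" by (cases "mulG p \<beta> \<gamma> x y")
  obtain v1 v2 v3 where v: "mulG p \<beta> \<gamma> y z = (v1,v2,v3)" by (cases "mulG p \<beta> \<gamma> y z")
  define bx where "bx = \<beta> x"
  define by' where "by' = \<beta> y"
  define gx where "gx = \<gamma> x"
  define gy where "gy = \<gamma> y"
  define h where "h = (p + 1) div 2"
  have w1: "[w1 = x1*y1] (mod p)" and w2: "[w2 = x2*y1 + bx*y2] (mod p)"
    and w3: "[w3 = - x1 * x2 * (y1 * (y1 - 1) div 2) + x3 * y1 + gx * y2 + x1 * bx * y3] (mod p)"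
    using w by (auto simp: x y mulG_simp cong_def bx_def gx_def)
  have v1: "[v1 = y1*z1] (mod p)" and v2: "[v2 = y2*z1 + by'*z2] (mod p)"
    and v3: "[v3 = - y1 * y2 * (z1 * (z1 - 1) div 2) + y3 * z1 + gy * z2 + y1 * by' * z3] (mod p)"
    using v by (auto simp: z y mulG_simp cong_def by'_def gy_def)
  have w3h: "[w3 = - x1 * x2 * (y1 * (y1 - 1) * h) + x3 * y1 + gx * y2 + x1 * bx * y3] (mod p)"
    using w3 unfolding h_def
    by (rule cong_trans) (intro cong_add cong_mult cong_uminus Ccong p(2) cong_refl)
  have v3h: "[v3 = - y1 * y2 * (z1 * (z1 - 1) * h) + y3 * z1 + gy * z2 + y1 * by' * z3] (mod p)"
    using v3 unfolding h_def
    by (rule cong_trans) (intro cong_add cong_mult cong_uminus Ccong p(2) cong_refl)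
  have bw: "[\<beta> (w1,w2,w3) = bx * by'] (mod p)" using H1[OF xyz(1,2)] w by (simp add: bx_def by'_def)
  have gw: "[\<gamma> (w1,w2,w3) = gx * by' + x1 * bx * gy] (mod p)" using H2[OF xyz(1,2)] w by (simp add: bx_def by'_def gx_def gy_def x)
  have c1: "[w1 * z1 = x1 * v1] (mod p)"
  proof -
    have "[w1 * z1 = x1*y1*z1] (mod p)" by (intro cong_mult w1 cong_refl)
    also have "[x1*y1*z1 = x1 * v1] (mod p)"
      by (rule cong_sym) (simp only: mult.assoc; intro cong_mult v1 cong_refl)
    finally show ?thesis .
  qed
  have c2: "[w2 * z1 + \<beta> (w1,w2,w3) * z2 = x2 * v1 + bx * v2] (mod p)"
  proof -
    have "[w2 * z1 + \<beta> (w1,w2,w3) * z2 = (x2*y1 + bx*y2) * z1 + (bx * by') * z2] (mod p)"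
      by (intro mod_cong_intro cong_add cong_mult w2 bw cong_refl)
    also have "(x2*y1 + bx*y2) * z1 + (bx * by') * z2 = x2 * (y1*z1) + bx * (y2*z1 + by'*z2)"
      by (simp add: algebra_simps)
    also have "[x2 * (y1*z1) + bx * (y2*z1 + by'*z2) = x2 * v1 + bx * v2] (mod p)"
      by (rule cong_sym) (intro mod_cong_intro cong_add cong_mult v1 v2 cong_refl)
    finally show ?thesis .
  qed
  have c3: "[- w1 * w2 * (z1 * (z1 - 1) div 2) + w3 * z1 + \<gamma> (w1,w2,w3) * z2 + w1 * \<beta> (w1,w2,w3) * z3
     = - x1 * x2 * (v1 * (v1 - 1) div 2) + x3 * v1 + gx * v2 + x1 * bx * v3] (mod p)"
  proof -
    have "[- w1 * w2 * (z1 * (z1 - 1) div 2) + w3 * z1 + \<gamma> (w1,w2,w3) * z2 + w1 * \<beta> (w1,w2,w3) * z3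
      = - (x1*y1) * (x2*y1 + bx*y2) * (z1*(z1-1)*h) + (- x1 * x2 * (y1*(y1-1)*h) + x3 * y1 + gx * y2 + x1 * bx * y3) * z1
        + (gx * by' + x1 * bx * gy) * z2 + (x1*y1) * (bx * by') * z3] (mod p)"
      by (unfold h_def, intro mod_cong_intro cong_add cong_mult cong_uminus w1 w2 w3h[unfolded h_def] bw gw Ccong p(2) cong_refl)
    also have "- (x1*y1) * (x2*y1 + bx*y2) * (z1*(z1-1)*h) + (- x1 * x2 * (y1*(y1-1)*h) + x3 * y1 + gx * y2 + x1 * bx * y3) * z1
        + (gx * by' + x1 * bx * gy) * z2 + (x1*y1) * (bx * by') * z3
      = - x1 * x2 * ((y1*z1) * ((y1*z1) - 1) * h) + x3 * (y1*z1) + gx * (y2*z1 + by'*z2)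
        + x1 * bx * (- y1 * y2 * (z1*(z1-1)*h) + y3 * z1 + gy * z2 + y1 * by' * z3)"
      by (simp add: algebra_simps)
    also have "[- x1 * x2 * ((y1*z1) * ((y1*z1) - 1) * h) + x3 * (y1*z1) + gx * (y2*z1 + by'*z2)
        + x1 * bx * (- y1 * y2 * (z1*(z1-1)*h) + y3 * z1 + gy * z2 + y1 * by' * z3)
       = - x1 * x2 * (v1 * (v1 - 1) div 2) + x3 * v1 + gx * v2 + x1 * bx * v3] (mod p)"
      unfolding h_def
      by (rule cong_sym) (intro mod_cong_intro cong_add cong_mult cong_uminus v1 v2 v3h[unfolded h_def] Ccong p(2) cong_refl)
    finally show ?thesis .
  qed
  have "mulG p \<beta> \<gamma> (w1,w2,w3) (z1,z2,z3) = mulG p \<beta> \<gamma> (x1,x2,x3) (v1,v2,v3)"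
    unfolding mulG_simp by (rule triple_eqI[OF c1 c2[unfolded bx_def x] c3[unfolded bx_def gx_def x]])
  then have "mulG p \<beta> \<gamma> (w1,w2,w3) z = mulG p \<beta> \<gamma> x (v1,v2,v3)" by (simp only: x z)
  then show ?thesis by (simp only: w v)
qed


lemma cong_sub_mult: "[(a::int) - p * k = a] (mod p)"
proof -
  have "a - p * k = a + (- k) * p" by simp
  then show ?thesis unfolding cong_def by (simp only: mod_mult_self1)
qed

lemma mul_distrib:
  fixes p :: int
  assumes p: "odd p"
  shows "mulG p \<beta> \<gamma> x (addG p y z) = addG p (mulG p \<beta> \<gamma> x y) (mulG p \<beta> \<gamma> x z)"
proof -
  obtain x1 x2 x3 where x: "x = (x1,x2,x3)" by (cases x)
  obtain y1 y2 y3 where y: "y = (y1,y2,y3)" by (cases y)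
  obtain z1 z2 z3 where z: "z = (z1,z2,z3)" by (cases z)
  define bx where "bx = \<beta> (x1,x2,x3)"
  define gx where "gx = \<gamma> (x1,x2,x3)"
  define h where "h = (p + 1) div 2"
  have hp: "p = 2*h - 1"
  proof -
    obtain k where "p = 2*k + 1" using p by (rule oddE)
    then show ?thesis unfolding h_def by simp
  qed
  have c1: "[x1 * ((y1 + z1) mod p) = x1 * y1 mod p + x1 * z1 mod p] (mod p)"
  proof -
    have "[x1 * ((y1 + z1) mod p) = x1 * (y1 + z1)] (mod p)" by (intro cong_mult mod_cong_intro cong_refl)
    also have "x1 * (y1 + z1) = x1 * y1 + x1 * z1" by (simp add: algebra_simps)
    also have "[x1 * y1 + x1 * z1 = x1 * y1 mod p + x1 * z1 mod p] (mod p)"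
      by (rule cong_sym) (intro cong_add mod_cong_intro cong_refl)
    finally show ?thesis .
  qed
  have c2: "[x2 * ((y1 + z1) mod p) + bx * ((y2 + z2) mod p) = (x2 * y1 + bx * y2) mod p + (x2 * z1 + bx * z2) mod p] (mod p)"
  proof -
    have "[x2 * ((y1 + z1) mod p) + bx * ((y2 + z2) mod p) = x2 * (y1 + z1) + bx * (y2 + z2)] (mod p)"
      by (intro cong_add cong_mult mod_cong_intro cong_refl)
    also have "x2 * (y1 + z1) + bx * (y2 + z2) = (x2 * y1 + bx * y2) + (x2 * z1 + bx * z2)" by (simp add: algebra_simps)
    also have "[(x2 * y1 + bx * y2) + (x2 * z1 + bx * z2) = (x2 * y1 + bx * y2) mod p + (x2 * z1 + bx * z2) mod p] (mod p)"
      by (rule cong_sym) (intro cong_add mod_cong_intro cong_refl)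
    finally show ?thesis .
  qed
  have c3: "[- x1 * x2 * (((y1 + z1) mod p) * (((y1 + z1) mod p) - 1) div 2) + x3 * ((y1 + z1) mod p) + gx * ((y2 + z2) mod p) + x1 * bx * ((y3 + z3 - y2 * z1) mod p)
     = (- x1 * x2 * (y1 * (y1 - 1) div 2) + x3 * y1 + gx * y2 + x1 * bx * y3) mod p
       + (- x1 * x2 * (z1 * (z1 - 1) div 2) + x3 * z1 + gx * z2 + x1 * bx * z3) mod p
       - (x2 * y1 + bx * y2) mod p * (x1 * z1 mod p)] (mod p)"
  proof -
    have "[- x1 * x2 * (((y1 + z1) mod p) * (((y1 + z1) mod p) - 1) div 2) + x3 * ((y1 + z1) mod p) + gx * ((y2 + z2) mod p) + x1 * bx * ((y3 + z3 - y2 * z1) mod p)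
      = - x1 * x2 * ((y1 + z1) * ((y1 + z1) - 1) * h) + x3 * (y1 + z1) + gx * (y2 + z2) + x1 * bx * (y3 + z3 - y2 * z1)] (mod p)"
      unfolding h_def by (intro cong_add cong_mult cong_uminus Ccong p mod_cong_intro cong_refl)
    also have "- x1 * x2 * ((y1 + z1) * ((y1 + z1) - 1) * h) + x3 * (y1 + z1) + gx * (y2 + z2) + x1 * bx * (y3 + z3 - y2 * z1)
      = (- x1 * x2 * (y1 * (y1 - 1) * h) + x3 * y1 + gx * y2 + x1 * bx * y3)
       + (- x1 * x2 * (z1 * (z1 - 1) * h) + x3 * z1 + gx * z2 + x1 * bx * z3)
       - (x2 * y1 + bx * y2) * (x1 * z1) - (2*h - 1) * (x1 * x2 * y1 * z1)"
      by (simp add: algebra_simps)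
    also have "\<dots> = (- x1 * x2 * (y1 * (y1 - 1) * h) + x3 * y1 + gx * y2 + x1 * bx * y3)
       + (- x1 * x2 * (z1 * (z1 - 1) * h) + x3 * z1 + gx * z2 + x1 * bx * z3)
       - (x2 * y1 + bx * y2) * (x1 * z1) - p * (x1 * x2 * y1 * z1)" by (simp only: hp)
    also have "[\<dots> = (- x1 * x2 * (y1 * (y1 - 1) * h) + x3 * y1 + gx * y2 + x1 * bx * y3)
       + (- x1 * x2 * (z1 * (z1 - 1) * h) + x3 * z1 + gx * z2 + x1 * bx * z3)
       - (x2 * y1 + bx * y2) * (x1 * z1)] (mod p)"
      by (rule cong_sub_mult)
    also have "[(- x1 * x2 * (y1 * (y1 - 1) * h) + x3 * y1 + gx * y2 + x1 * bx * y3)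
       + (- x1 * x2 * (z1 * (z1 - 1) * h) + x3 * z1 + gx * z2 + x1 * bx * z3)
       - (x2 * y1 + bx * y2) * (x1 * z1) = (- x1 * x2 * (y1 * (y1 - 1) div 2) + x3 * y1 + gx * y2 + x1 * bx * y3) mod p
       + (- x1 * x2 * (z1 * (z1 - 1) div 2) + x3 * z1 + gx * z2 + x1 * bx * z3) mod p
       - (x2 * y1 + bx * y2) mod p * (x1 * z1 mod p)] (mod p)"
      unfolding h_def by (rule cong_sym) (intro cong_add cong_diff cong_mult cong_uminus Ccong p mod_cong_intro cong_refl)
    finally show ?thesis .
  qed
  show ?thesis unfolding x y z addG_simp mulG_simp
    by (rule triple_eqI[OF c1 c2[unfolded bx_def] c3[unfolded bx_def gx_def]])
qed

lemma mul_one_left: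
  fixes p :: int
  assumes "[\<beta> genA = 1] (mod p)" "[\<gamma> genA = 0] (mod p)" "x \<in> G1 p"
  shows "mulG p \<beta> \<gamma> genA x = x"
proof -
  obtain x1 x2 x3 where x: "x = (x1,x2,x3)" by (cases x)
  have r: "0 \<le> x1 \<and> x1 < p \<and> 0 \<le> x2 \<and> x2 < p \<and> 0 \<le> x3 \<and> x3 < p" using assms(3) x by (simp add: G1_iff)
  have b: "[\<beta> (1,0,0) = 1] (mod p)" "[\<gamma> (1,0,0) = 0] (mod p)" using assms(1,2) by (simp_all add: genA_def)
  have "[1 * x1 = x1] (mod p)" by simp
  moreover have "[0 * x1 + \<beta> (1,0,0) * x2 = x2] (mod p)"
  proof -
    have "[0 * x1 + \<beta> (1,0,0) * x2 = 0 * x1 + 1 * x2] (mod p)" by (intro cong_add cong_mult b cong_refl)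
    then show ?thesis by simp
  qed
  moreover have "[- 1 * 0 * (x1 * (x1 - 1) div 2) + 0 * x1 + \<gamma> (1,0,0) * x2 + 1 * \<beta> (1,0,0) * x3 = x3] (mod p)"
  proof -
    have "[- 1 * 0 * (x1 * (x1 - 1) div 2) + 0 * x1 + \<gamma> (1,0,0) * x2 + 1 * \<beta> (1,0,0) * x3
       = - 1 * 0 * (x1 * (x1 - 1) div 2) + 0 * x1 + 0 * x2 + 1 * 1 * x3] (mod p)"
      by (intro cong_add cong_mult b cong_refl)
    then show ?thesis by simp
  qed
  ultimately have "mulG p \<beta> \<gamma> (1,0,0) (x1,x2,x3) = (x1 mod p, x2 mod p, x3 mod p)"
    unfolding mulG_simp by (rule triple_eqI)
  then show ?thesis using r by (simp add: x genA_def mod_pos_pos_trivial)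
qed

lemma mul_one_right:
  fixes p :: int
  assumes "x \<in> G1 p"
  shows "mulG p \<beta> \<gamma> x genA = x"
proof -
  obtain x1 x2 x3 where x: "x = (x1,x2,x3)" by (cases x)
  have r: "0 \<le> x1 \<and> x1 < p \<and> 0 \<le> x2 \<and> x2 < p \<and> 0 \<le> x3 \<and> x3 < p" using assms x by (simp add: G1_iff)
  then show ?thesis by (simp add: x genA_def mulG_simp mod_pos_pos_trivial)
qed


lemma right_inv:
  fixes p :: int
  assumes pp: "prime p"
  and H4: "coprime (\<beta> x) p"
  and xG: "x \<in> G1 p" and x1: "fst x \<noteq> 0"
  shows "\<exists>y\<in>G1 p. fst y \<noteq> 0 \<and> mulG p \<beta> \<gamma> x y = genA"
proof -
  obtain x1 x2 x3 where x: "x = (x1,x2,x3)" by (cases x)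
  have p1: "p > 1" using pp by (simp add: prime_gt_1_int)
  have r: "0 \<le> x1 \<and> x1 < p" using xG x by (simp add: G1_iff)
  have "x1 \<noteq> 0" using x1 x by simp
  then have "\<not> p dvd x1" using r zdvd_not_zless[of x1 p] by simp
  then have "coprime p x1" by (rule prime_imp_coprime[OF pp])
  then have cx1: "coprime x1 p" by (rule coprime_commute[THEN iffD1])
  define bx where "bx = \<beta> (x1,x2,x3)"
  define gx where "gx = \<gamma> (x1,x2,x3)"
  have cb: "coprime bx p" using H4 x bx_def by simp
  obtain u where u: "[x1 * u = 1] (mod p)" using cong_solve_coprime_int[OF cx1] by blast
  obtain v where v: "[bx * v = 1] (mod p)" using cong_solve_coprime_int[OF cb] by blast
  have cxb: "coprime (x1 * bx) p" using cx1 cb by simp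
  obtain t where t: "[x1 * bx * t = 1] (mod p)" using cong_solve_coprime_int[OF cxb] by blast
  define y1 where "y1 = u mod p"
  define y2 where "y2 = (- x2 * y1 * v) mod p"
  define D where "D = x1 * x2 * (y1 * (y1 - 1) div 2) - x3 * y1 - gx * y2"
  define y3 where "y3 = (D * t) mod p"
  have e1: "[x1 * y1 = 1] (mod p)"
  proof -
    have "[x1 * y1 = x1 * u] (mod p)" unfolding y1_def by (intro cong_mult mod_cong_intro cong_refl)
    also note u
    finally show ?thesis .
  qed
  have e2: "[x2 * y1 + bx * y2 = 0] (mod p)"
  proof -
    have "[x2 * y1 + bx * y2 = x2 * y1 + bx * (- x2 * y1 * v)] (mod p)"
      unfolding y2_def by (intro cong_add cong_mult mod_cong_intro cong_refl)
    also have "x2 * y1 + bx * (- x2 * y1 * v) = x2 * y1 - x2 * y1 * (bx * v)" by (simp add: algebra_simps)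
    also have "[x2 * y1 - x2 * y1 * (bx * v) = x2 * y1 - x2 * y1 * 1] (mod p)"
      by (intro cong_diff cong_mult v cong_refl)
    finally show ?thesis by simp
  qed
  have e3: "[- x1 * x2 * (y1 * (y1 - 1) div 2) + x3 * y1 + gx * y2 + x1 * bx * y3 = 0] (mod p)"
  proof -
    have "- x1 * x2 * (y1 * (y1 - 1) div 2) + x3 * y1 + gx * y2 + x1 * bx * y3 = - D + x1 * bx * y3"
      unfolding D_def by (simp add: algebra_simps)
    also have "[- D + x1 * bx * y3 = - D + x1 * bx * (D * t)] (mod p)"
      unfolding y3_def by (intro cong_add cong_mult mod_cong_intro cong_refl)
    also have "- D + x1 * bx * (D * t) = - D + D * (x1 * bx * t)" by (simp add: algebra_simps)
    also have "[- D + D * (x1 * bx * t) = - D + D * 1] (mod p)"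
      by (intro cong_add cong_mult t cong_refl)
    finally show ?thesis by simp
  qed
  have "mulG p \<beta> \<gamma> (x1,x2,x3) (y1,y2,y3) = (1 mod p, 0 mod p, 0 mod p)"
    unfolding mulG_simp by (rule triple_eqI[OF e1 e2[unfolded bx_def] e3[unfolded bx_def gx_def]])
  then have m: "mulG p \<beta> \<gamma> x (y1,y2,y3) = genA" using p1 by (simp add: x genA_def)
  have yG: "(y1,y2,y3) \<in> G1 p" using p1 by (simp add: G1_iff y1_def y2_def y3_def)
  have "y1 \<noteq> 0"
  proof
    assume "y1 = 0"
    then have "[0 = 1] (mod p)" using e1 by simp
    then show False using p1 by (simp add: cong_def)
  qed
  then show ?thesis using m yG by force
qed

theorem generic:
  fixes p :: int
  assumes pp: "prime p" and po: "odd p"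
  and H1: "\<And>x y. x \<in> G1 p \<Longrightarrow> y \<in> G1 p \<Longrightarrow> [\<beta> (mulG p \<beta> \<gamma> x y) = \<beta> x * \<beta> y] (mod p)"
  and H2: "\<And>x y. x \<in> G1 p \<Longrightarrow> y \<in> G1 p \<Longrightarrow> [\<gamma> (mulG p \<beta> \<gamma> x y) = \<gamma> x * \<beta> y + fst x * \<beta> x * \<gamma> y] (mod p)"
  and H3: "[\<beta> genA = 1] (mod p)" "[\<gamma> genA = 0] (mod p)"
  and H4: "\<And>x. x \<in> G1 p \<Longrightarrow> fst x \<noteq> 0 \<Longrightarrow> coprime (\<beta> x) p"
  shows "local_nearring_with_identity (G1 p) (addG p) zeroG (mulG p \<beta> \<gamma>) genA"
proof -
  have p1: "p > 1" using pp by (simp add: prime_gt_1_int)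
  then have p0: "p > 0" by simp
  have grp: "group (add_grp (G1 p) (addG p) zeroG)" by (rule add_group[OF p0])
  have nr: "nearring (G1 p) (addG p) zeroG (mulG p \<beta> \<gamma>)"
    unfolding nearring_def
    using grp mulG_closed[OF p0] mul_assoc[OF p0 po H1 H2] mul_distrib[OF po] by blast
  have eG: "genA \<in> G1 p" using p1 by (simp add: genA_def G1_iff)
  have ids: "\<forall>x\<in>G1 p. mulG p \<beta> \<gamma> genA x = x \<and> mulG p \<beta> \<gamma> x genA = x"
    using mul_one_left[where \<beta>=\<beta> and \<gamma>=\<gamma> and p=p, OF H3(1) H3(2)] mul_one_right by blast
  have N: "{x \<in> G1 p. \<not> (\<exists>y\<in>G1 p. mulG p \<beta> \<gamma> x y = genA \<and> mulG p \<beta> \<gamma> y x = genA)}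
      = {x \<in> G1 p. fst x = 0}"
  proof (intro equalityI subsetI)
    fix x assume a: "x \<in> {x \<in> G1 p. \<not> (\<exists>y\<in>G1 p. mulG p \<beta> \<gamma> x y = genA \<and> mulG p \<beta> \<gamma> y x = genA)}"
    then have xG: "x \<in> G1 p" by simp
    show "x \<in> {x \<in> G1 p. fst x = 0}"
    proof (rule ccontr)
      assume "x \<notin> {x \<in> G1 p. fst x = 0}"
      then have nz: "fst x \<noteq> 0" using xG by simp
      obtain y where yG: "y \<in> G1 p" and y1: "fst y \<noteq> 0" and xy: "mulG p \<beta> \<gamma> x y = genA"
        using right_inv[where \<gamma>=\<gamma> and \<beta>=\<beta>, OF pp H4[OF xG nz] xG nz] by blast
      obtain z where zG: "z \<in> G1 p" and yz: "mulG p \<beta> \<gamma> y z = genA"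
        using right_inv[where \<gamma>=\<gamma> and \<beta>=\<beta>, OF pp H4[OF yG y1] yG y1] by blast
      have "x = mulG p \<beta> \<gamma> x (mulG p \<beta> \<gamma> y z)" using yz mul_one_right[OF xG] by simp
      also have "\<dots> = mulG p \<beta> \<gamma> (mulG p \<beta> \<gamma> x y) z" using mul_assoc[OF p0 po H1 H2 xG yG zG] by simp
      also have "\<dots> = z" using xy mul_one_left[where \<beta>=\<beta> and \<gamma>=\<gamma> and p=p, OF H3(1) H3(2) zG] by simp
      finally have "mulG p \<beta> \<gamma> y x = genA" using yz by simp
      then show False using a yG xy by blast
    qed
  next
    fix x assume a: "x \<in> {x \<in> G1 p. fst x = 0}"
    then have xG: "x \<in> G1 p" and x0: "fst x = 0" by auto
    have "\<And>y. mulG p \<beta> \<gamma> x y \<noteq> genA"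
    proof -
      fix y :: "int \<times> int \<times> int"
      obtain x1 x2 x3 where x: "x = (x1,x2,x3)" by (cases x)
      obtain y1 y2 y3 where y: "y = (y1,y2,y3)" by (cases y)
      have "fst (mulG p \<beta> \<gamma> x y) = 0" using x0 by (simp add: x y mulG_simp)
      then show "mulG p \<beta> \<gamma> x y \<noteq> genA" by (auto simp: genA_def)
    qed
    then show "x \<in> {x \<in> G1 p. \<not> (\<exists>y\<in>G1 p. mulG p \<beta> \<gamma> x y = genA \<and> mulG p \<beta> \<gamma> y x = genA)}"
      using xG by blast
  qed
  have sg: "subgroup {x \<in> G1 p. fst x = 0} (add_grp (G1 p) (addG p) zeroG)"
  proof (rule group.subgroupI[OF grp])
    show "{x \<in> G1 p. fst x = 0} \<subseteq> carrier (add_grp (G1 p) (addG p) zeroG)" by auto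
    show "{x \<in> G1 p. fst x = 0} \<noteq> {}" using p0 by (auto simp: G1_iff intro!: exI[of _ "(0,0,0)"])
  next
    fix a assume a: "a \<in> {x \<in> G1 p. fst x = 0}"
    obtain a1 a2 a3 where av: "a = (a1,a2,a3)" by (cases a)
    have aG: "a \<in> G1 p" and a1: "a1 = 0" using a av by auto
    let ?y = "((- a1) mod p, (- a2) mod p, (- a3 - a2 * a1) mod p)"
    have yG: "?y \<in> G1 p" using p0 by (simp add: G1_iff)
    have "addG p ?y a = zeroG" unfolding av by (rule addG_inv[OF p0])
    then have "inv\<^bsub>add_grp (G1 p) (addG p) zeroG\<^esub> a = ?y"
      using group.inv_equality[OF grp, of ?y a] aG yG by simp
    then show "inv\<^bsub>add_grp (G1 p) (addG p) zeroG\<^esub> a \<in> {x \<in> G1 p. fst x = 0}"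
      using yG a1 by simp
  next
    fix a b assume a: "a \<in> {x \<in> G1 p. fst x = 0}" and b: "b \<in> {x \<in> G1 p. fst x = 0}"
    obtain a1 a2 a3 where av: "a = (a1,a2,a3)" by (cases a)
    obtain b1 b2 b3 where bv: "b = (b1,b2,b3)" by (cases b)
    show "a \<otimes>\<^bsub>add_grp (G1 p) (addG p) zeroG\<^esub> b \<in> {x \<in> G1 p. fst x = 0}"
      using a b p0 by (simp add: av bv addG_simp G1_iff)
  qed
  show ?thesis unfolding local_nearring_with_identity_def
    using nr eG ids sg N by simp
qed


lemma beta_pow_mult:
  "[(\<lambda>(x1, x2, x3). x1 ^ i mod p) (mulG p (\<lambda>(x1, x2, x3). x1 ^ i mod p) \<gamma> x y)
    = (\<lambda>(x1, x2, x3). x1 ^ i mod p) x * (\<lambda>(x1, x2, x3). (x1::int) ^ i mod p) y] (mod p)"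
proof -
  obtain x1 x2 x3 where x: "x = (x1,x2,x3)" by (cases x)
  obtain y1 y2 y3 where y: "y = (y1,y2,y3)" by (cases y)
  have "[((x1*y1) mod p)^i mod p = (x1^i mod p) * (y1^i mod p)] (mod p)"
  proof -
    have "[((x1*y1) mod p)^i mod p = (x1*y1)^i] (mod p)" by (intro mod_cong_intro cong_pow cong_refl)
    also have "(x1*y1)^i = x1^i * y1^i" by (rule power_mult_distrib)
    also have "[x1^i * y1^i = (x1^i mod p)*(y1^i mod p)] (mod p)"
      by (rule cong_sym) (intro cong_mult mod_cong_intro cong_refl)
    finally show ?thesis .
  qed
  then show ?thesis by (simp only: x y mulG_simp prod.case)
qed

lemma coprime_x1:
  fixes p :: int
  assumes pp: "prime p" and xG: "x \<in> G1 p" and nz: "fst x \<noteq> 0"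
  shows "coprime (fst x) p"
proof -
  obtain x1 x2 x3 where x: "x = (x1,x2,x3)" by (cases x)
  have r: "0 \<le> x1 \<and> x1 < p" using xG x by (simp add: G1_iff)
  have "x1 \<noteq> 0" using nz x by simp
  then have "\<not> p dvd x1" using r zdvd_not_zless[of x1 p] by simp
  then have "coprime p x1" by (rule prime_imp_coprime[OF pp])
  then show ?thesis unfolding x fst_conv by (rule coprime_commute[THEN iffD1])
qed

lemma H4_pow:
  fixes p :: int
  assumes pp: "prime p" and xG: "x \<in> G1 p" and nz: "fst x \<noteq> 0"
  shows "coprime ((\<lambda>(x1, x2, x3). x1 ^ i mod p) x) p"
proof -
  obtain x1 x2 x3 where x: "x = (x1,x2,x3)" by (cases x)
  have c: "coprime x1 p" using coprime_x1[OF assms] x by simp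
  have "p \<noteq> 0" using pp by auto
  then show ?thesis using c by (simp add: x)
qed

theorem lemma8:
  fixes p :: int
  assumes "prime p" and "odd p"
  shows "(\<forall>i::nat. 0 < i \<and> int i < p \<longrightarrow>
            local_nearring_with_identity (G1 p) (addG p) zeroG
              (mulG p (\<lambda>(x1, x2, x3). x1 ^ i mod p) (\<lambda>_. 0)) genA)
       \<and> local_nearring_with_identity (G1 p) (addG p) zeroG
              (mulG p (\<lambda>_. 1) (\<lambda>_. 0)) genA
       \<and> local_nearring_with_identity (G1 p) (addG p) zeroG
              (mulG p (\<lambda>(x1, x2, x3). x1 ^ 2 mod p) (\<lambda>(x1, x2, x3). (x1 * x2) mod p)) genA"
proof (intro conjI allI impI)
  have p1: "p > 1" using assms(1) by (simp add: prime_gt_1_int)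
  fix i :: nat assume i: "0 < i \<and> int i < p"
  show "local_nearring_with_identity (G1 p) (addG p) zeroG
              (mulG p (\<lambda>(x1, x2, x3). x1 ^ i mod p) (\<lambda>_. 0)) genA"
    apply (rule generic[OF assms])
        apply (rule beta_pow_mult)
       apply simp
      apply (simp add: genA_def cong_def)
     apply simp
    apply (rule H4_pow[OF assms(1)]; assumption)
    done
next
  show "local_nearring_with_identity (G1 p) (addG p) zeroG
              (mulG p (\<lambda>_. 1) (\<lambda>_. 0)) genA"
    by (rule generic[OF assms]) simp_all
next
  show "local_nearring_with_identity (G1 p) (addG p) zeroG
              (mulG p (\<lambda>(x1, x2, x3). x1 ^ 2 mod p) (\<lambda>(x1, x2, x3). (x1 * x2) mod p)) genA"
  proof (rule generic[OF assms])
    fix x y :: "int \<times> int \<times> int"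
    show "[(\<lambda>(x1, x2, x3). x1 ^ 2 mod p) (mulG p (\<lambda>(x1, x2, x3). x1 ^ 2 mod p) (\<lambda>(x1, x2, x3). x1 * x2 mod p) x y) =
         (\<lambda>(x1, x2, x3). x1 ^ 2 mod p) x * (\<lambda>(x1, x2, x3). x1 ^ 2 mod p) y] (mod p)"
      by (rule beta_pow_mult)
    obtain x1 x2 x3 where x: "x = (x1,x2,x3)" by (cases x)
    obtain y1 y2 y3 where y: "y = (y1,y2,y3)" by (cases y)
    have "[(x1 * y1) mod p * ((x2 * y1 + x1 ^ 2 mod p * y2) mod p) mod p
      = (x1 * x2) mod p * (y1 ^ 2 mod p) + x1 * (x1 ^ 2 mod p) * ((y1 * y2) mod p)] (mod p)"
    proof -
      have "[(x1 * y1) mod p * ((x2 * y1 + x1 ^ 2 mod p * y2) mod p) mod p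
         = (x1 * y1) * (x2 * y1 + x1 ^ 2 * y2)] (mod p)"
        by (intro mod_cong_intro cong_mult cong_add cong_refl)
      also have "(x1 * y1) * (x2 * y1 + x1 ^ 2 * y2) = (x1 * x2) * (y1 ^ 2) + x1 * (x1 ^ 2) * (y1 * y2)"
        by (simp add: algebra_simps power2_eq_square)
      also have "[(x1 * x2) * (y1 ^ 2) + x1 * (x1 ^ 2) * (y1 * y2)
         = (x1 * x2) mod p * (y1 ^ 2 mod p) + x1 * (x1 ^ 2 mod p) * ((y1 * y2) mod p)] (mod p)"
        by (rule cong_sym) (intro mod_cong_intro cong_mult cong_add cong_refl)
      finally show ?thesis .
    qed
    then show "[(\<lambda>(x1, x2, x3). x1 * x2 mod p) (mulG p (\<lambda>(x1, x2, x3). x1 ^ 2 mod p) (\<lambda>(x1, x2, x3). x1 * x2 mod p) x y) =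
         (\<lambda>(x1, x2, x3). x1 * x2 mod p) x * (\<lambda>(x1, x2, x3). x1 ^ 2 mod p) y +
         fst x * (\<lambda>(x1, x2, x3). x1 ^ 2 mod p) x * (\<lambda>(x1, x2, x3). x1 * x2 mod p) y] (mod p)"
      by (simp only: x y mulG_simp prod.case fst_conv)
  next
    show "[(\<lambda>(x1, x2, x3). x1 ^ 2 mod p) genA = 1] (mod p)" by (simp add: genA_def cong_def)
    show "[(\<lambda>(x1, x2, x3). x1 * x2 mod p) genA = 0] (mod p)" by (simp add: genA_def cong_def)
  next
    fix x assume "x \<in> G1 p" "fst x \<noteq> 0"
    then show "coprime ((\<lambda>(x1, x2, x3). x1 ^ 2 mod p) x) p" by (rule H4_pow[OF assms(1)])
  qed
qed

end
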